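(* Let $P_1:\mathbb R^n\to\mathbb R$ be convex and continuous, and for $i=1,\dots,m$ let $A_i\in\mathbb R^{q_i\times n}$ and $l_i:\mathbb R^{q_i}\to\mathbb R$ be strictly convex; let $g(x):=(l_1(A_1x),\dots,l_m(A_mx))$ with $\{x:g(x)\le0\}\ne\emptyset$, and $F(x):=P_1(x)+\delta_{\{g\le0\}}(x)$. Let $\bar x\in\operatorname{Arg\,min}F$. Suppose that (i) there exists a Lagrange multiplier $\bar\lambda\in\mathbb R^m_+$ for the problem $\min_x F(x)$, and the function $x\mapsto P_1(x)+\langle\bar\lambda,g(x)\rangle$ is a KL function with exponent $\alpha\in(0,1)$; and (ii) strict complementarity holds at $(\bar x,\bar\lambda)$: for every $i$ with $\bar\lambda_i=0$ one has $l_i(A_i\bar x)<0$. Then $F$ satisfies the KL property at $\bar x$ with exponent $\alpha$.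
   Context: $\delta_C$ denotes the indicator function of $C$ ($0$ on $C$, $+\infty$ outside); vector inequalities are componentwise; $\partial$ denotes the (convex) subdifferential. A Lagrange multiplier for $\min_x F(x)$ is a vector $\bar\lambda\in\mathbb R^m_+$ such that $\inf_{x\in\mathbb R^n}\{P_1(x)+\langle\bar\lambda,g(x)\rangle\}=\inf_{x\in\mathbb R^n}F(x)>-\infty$. KL property with exponent $\alpha\in[0,1)$: a proper closed $h$ has it at $\hat x\in{\rm dom}\,\partial h$ if there exist $a\in(0,\infty]$, a neighborhood $V$ of $\hat x$ and $a_0>0$ such that $a_0(1-\alpha)(h(x)-h(\hat x))^{-\alpha}\,{\rm dist}(0,\partial h(x))\ge1$ for all $x\in V$ with $h(\hat x)<h(x)<h(\hat x)+a$; $h$ is a KL function with exponent $\alpha$ if this holds at every point of ${\rm dom}\,\partial h$. *)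

theory Defs
  imports "HOL-Analysis.Analysis"
begin

definition subdiff :: "(real^'n \<Rightarrow> ereal) \<Rightarrow> real^'n \<Rightarrow> (real^'n) set" where
  "subdiff h x = {v. \<bar>h x\<bar> \<noteq> \<infinity> \<and>
      (\<forall>y. h y \<ge> h x + ereal (v \<bullet> (y - x)))}"

definition dom_subdiff :: "(real^'n \<Rightarrow> ereal) \<Rightarrow> (real^'n) set" where
  "dom_subdiff h = {x. subdiff h x \<noteq> {}}"

text \<open>KL property with exponent alpha at xh.  dist(0, empty set) = +infinity,
  so the inequality is taken to hold when the subdifferential is empty.\<close>
definition KL_at :: "(real^'n \<Rightarrow> ereal) \<Rightarrow> real \<Rightarrow> real^'n \<Rightarrow> bool" where
  "KL_at h \<alpha> xh \<longleftrightarrow> xh \<in> dom_subdiff h \<and>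
     (\<exists>a::ereal. a > 0 \<and> (\<exists>V. open V \<and> xh \<in> V \<and> (\<exists>a0::real. a0 > 0 \<and>
        (\<forall>x\<in>V. h xh < h x \<and> h x < h xh + a \<longrightarrow>
           subdiff h x = {} \<or>
           a0 * (1 - \<alpha>) * (real_of_ereal (h x - h xh)) powr (- \<alpha>)
              * infdist 0 (subdiff h x) \<ge> 1))))"

definition KL_function :: "(real^'n \<Rightarrow> ereal) \<Rightarrow> real \<Rightarrow> bool" where
  "KL_function h \<alpha> \<longleftrightarrow> (\<forall>x\<in>dom_subdiff h. KL_at h \<alpha> x)"

text \<open>R^q is represented as the vectors u :: nat => real with u k = 0 for k >= q.\<close>
definition Rq :: "nat \<Rightarrow> (nat \<Rightarrow> real) set" where
  "Rq q = {u. \<forall>k\<ge>q. u k = 0}"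

definition strictly_convex_Rq :: "nat \<Rightarrow> ((nat \<Rightarrow> real) \<Rightarrow> real) \<Rightarrow> bool" where
  "strictly_convex_Rq q l \<longleftrightarrow> (\<forall>u\<in>Rq q. \<forall>v\<in>Rq q. \<forall>t::real. u \<noteq> v \<and> 0 < t \<and> t < 1 \<longrightarrow>
       l (\<lambda>k. t * u k + (1 - t) * v k) < t * l u + (1 - t) * l v)"

definition matvec :: "nat \<Rightarrow> (nat \<Rightarrow> 'n \<Rightarrow> real) \<Rightarrow> real^'n \<Rightarrow> (nat \<Rightarrow> real)" where
  "matvec q M x = (\<lambda>k. if k < q then (\<Sum>j\<in>UNIV. M k j * x $ j) else 0)"

end

theory Submission
  imports Defs
begin


lemma prox_exists:
  fixes f :: "'a::euclidean_space \<Rightarrow> real"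
  assumes cvx: "convex_on UNIV f" and cont: "continuous_on UNIV f"
    and nn: "\<forall>y. 0 \<le> f y" and lp: "lam > 0"
  shows "\<exists>p. f p + (norm (p - x))^2/(2*lam) \<le> f x \<and>
             (\<forall>y. f p + ((1/lam) *\<^sub>R (x - p)) \<bullet> (y - p) \<le> f y)"
proof -
  define \<phi> where "\<phi> y = f y + (norm (y - x))^2/(2*lam)" for y
  define r where "r = sqrt (2*lam*f x)"
  have r0: "0 \<le> r" using nn lp by (simp add: r_def)
  have "continuous_on (cball x r) \<phi>" unfolding \<phi>_def
    by (intro continuous_intros continuous_on_subset[OF cont]) (use lp in auto)
  then obtain p where p: "p \<in> cball x r" "\<forall>y\<in>cball x r. \<phi> p \<le> \<phi> y"
    using continuous_attains_inf[OF compact_cball, of x r \<phi>] r0 by auto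
  have glob: "\<phi> p \<le> \<phi> y" for y
  proof (cases "y \<in> cball x r")
    case True then show ?thesis using p by auto
  next
    case False
    then have "r < norm (y - x)" by (simp add: dist_norm norm_minus_commute)
    then have "r^2 < (norm (y - x))^2" using r0 by (simp add: power_strict_mono)
    moreover have "r^2 = 2*lam*f x" using nn lp by (simp add: r_def)
    ultimately have "f x < (norm (y - x))^2/(2*lam)" using lp by (simp add: field_simps)
    then have "\<phi> x < \<phi> y" using nn[rule_format, of y] by (simp add: \<phi>_def)
    moreover have "\<phi> p \<le> \<phi> x" using p r0 by auto
    ultimately show ?thesis by simp
  qed
  have px: "\<phi> p \<le> f x" using glob[of x] by (simp add: \<phi>_def)
  have sub: "f p + ((1/lam) *\<^sub>R (x - p)) \<bullet> (y - p) \<le> f y" for y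
  proof -
    define I where "I = (p - x) \<bullet> (y - p)"
    define M where "M = (norm (y - p))^2"
    define N where "N = (norm (p - x))^2"
    have M0: "0 \<le> M" by (simp add: M_def)
    have key: "0 \<le> f y - f p + I/lam + t*M/(2*lam)" if t: "0 < t" "t \<le> 1" for t
    proof -
      have "\<phi> p \<le> \<phi> ((1-t) *\<^sub>R p + t *\<^sub>R y)" by (rule glob)
      moreover have "f ((1-t) *\<^sub>R p + t *\<^sub>R y) \<le> (1-t) * f p + t * f y"
        using convex_onD[OF cvx, of t p y] t by auto
      moreover have "(norm ((1-t) *\<^sub>R p + t *\<^sub>R y - x))^2 = N + 2*t*I + t^2*M"
      proof -
        have "(1-t) *\<^sub>R p + t *\<^sub>R y - x = (p - x) + t *\<^sub>R (y - p)" by (simp add: algebra_simps)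
        then show ?thesis unfolding N_def I_def M_def power2_norm_eq_inner
          by (simp add: inner_add_left inner_add_right inner_commute power2_eq_square algebra_simps)
      qed
      ultimately have "f p + N/(2*lam) \<le> (1-t) * f p + t * f y + (N + 2*t*I + t^2*M)/(2*lam)"
        by (simp add: \<phi>_def N_def)
      then have "0 \<le> t * (f y - f p) + (2*t*I + t^2*M)/(2*lam)"
        by (simp add: add_divide_distrib algebra_simps)
      also have "t * (f y - f p) + (2*t*I + t^2*M)/(2*lam) = t * (f y - f p + I/lam + t*M/(2*lam))"
        using lp by (simp add: field_simps power2_eq_square)
      finally have "0 \<le> t * (f y - f p + I/lam + t*M/(2*lam))" .
      then show ?thesis using t by (simp add: zero_le_mult_iff)
    qed
    have "-(f y - f p + I/lam) \<le> 0"
    proof (rule field_le_epsilon)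
      fix e :: real assume e: "0 < e"
      define t where "t = min 1 (e * (2*lam) / (M + 1))"
      have t0: "0 < t" "t \<le> 1" using e lp M0 by (auto simp: t_def)
      have "t * M/(2*lam) \<le> e"
      proof -
        have "t \<le> e * (2*lam) / (M + 1)" by (simp add: t_def)
        then have "t * M \<le> e * (2*lam) / (M + 1) * M" using M0 by (rule mult_right_mono)
        also have "\<dots> \<le> e * (2*lam)" using M0 e lp by (simp add: field_simps)
        finally show ?thesis using lp by (simp add: field_simps)
      qed
      then show "-(f y - f p + I/lam) \<le> 0 + e" using key[OF t0] by linarith
    qed
    moreover have "((1/lam) *\<^sub>R (x - p)) \<bullet> (y - p) = - I/lam"
      by (simp add: I_def inner_diff_left inner_diff_right divide_simps algebra_simps)
    ultimately show ?thesis by simp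
  qed
  show ?thesis using px sub by (auto simp: \<phi>_def)
qed

lemma kl_step:
  fixes f :: "'a::euclidean_space \<Rightarrow> real"
  assumes cvx: "convex_on UNIV f" and cont: "continuous_on UNIV f"
    and nn: "\<forall>y. 0 \<le> f y" and al: "0 < \<alpha>" "\<alpha> < 1" and c: "c > 0"
    and KL: "\<forall>p w. dist p xb < \<delta> \<longrightarrow> 0 < f p \<longrightarrow> f p < a \<longrightarrow>
               (\<forall>y. f p + w \<bullet> (y - p) \<le> f y) \<longrightarrow> c * f p powr \<alpha> \<le> norm w"
    and y: "0 < f y" "f y < a" "dist y xb + sqrt (8/c^2) * f y powr (1-\<alpha>) < \<delta>"
  shows "\<exists>p. f p \<le> f y / 2 \<and> dist y p \<le> sqrt (8/c^2) * f y powr (1-\<alpha>)"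
proof -
  define s where "s = f y"
  define u where "u = s powr (1-\<alpha>)"
  define \<kappa> where "\<kappa> = 4/c^2"
  define lam where "lam = \<kappa> * u^2 / s"
  have s0: "0 < s" using y by (simp add: s_def)
  have u0: "0 < u" using s0 by (simp add: u_def)
  have k0: "0 < \<kappa>" using c by (simp add: \<kappa>_def)
  have l0: "0 < lam" using s0 u0 k0 by (simp add: lam_def)
  obtain p where p1: "f p + (norm (p - y))^2/(2*lam) \<le> f y"
      and p2: "\<forall>z. f p + ((1/lam) *\<^sub>R (y - p)) \<bullet> (z - p) \<le> f z"
    using prox_exists[OF cvx cont nn l0, of y] by blast
  have "(norm (p - y))^2/(2*lam) \<le> s" using p1 nn[rule_format, of p] by (simp add: s_def)
  then have "(norm (p - y))^2 \<le> 2*lam* s" using l0 by (simp add: field_simps)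
  also have "2*lam* s = 2*\<kappa>*u^2" using s0 by (simp add: lam_def)
  also have "\<dots> = (sqrt (8/c^2) * u)^2"
  proof -
    have "(sqrt (8/c^2) * u)^2 = (sqrt (8/c^2))^2 * u^2" by (rule power_mult_distrib)
    also have "(sqrt (8/c^2))^2 = 8/c^2" by (rule real_sqrt_pow2) simp
    also have "8/c^2 * u^2 = 2*\<kappa>*u^2" unfolding \<kappa>_def by simp
    finally show ?thesis by (rule sym)
  qed
  finally have sq: "(norm (p - y))^2 \<le> (sqrt (8/c^2) * u)^2" .
  have "norm (p - y) \<le> sqrt (8/c^2) * u"
    using power2_le_imp_le[OF sq] u0 by simp
  then have dyp: "dist y p \<le> sqrt (8/c^2) * u" by (simp add: dist_norm norm_minus_commute)
  have "f p \<le> s / 2"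
  proof (rule ccontr)
    assume "\<not> f p \<le> s/2"
    then have fp: "s/2 < f p" by simp
    have "dist p xb \<le> dist y xb + dist y p" by (metis dist_commute dist_triangle)
    then have "dist p xb < \<delta>" using dyp y(3) by (simp add: u_def s_def)
    moreover have "f p < a"
    proof -
      have "0 \<le> (norm (p - y))^2/(2*lam)" using l0 by simp
      then show ?thesis using p1 y(2) by linarith
    qed
    moreover have "0 < f p" using fp s0 by simp
    ultimately have "c * f p powr \<alpha> \<le> norm ((1/lam) *\<^sub>R (y - p))" using KL p2 by blast
    also have "\<dots> = norm (p - y) / lam" using l0 by (simp add: norm_minus_commute)
    finally have A: "c * f p powr \<alpha> * lam \<le> norm (p - y)" using l0 by (simp add: field_simps)
    have B1: "(s/2) powr \<alpha> \<le> f p powr \<alpha>" using fp s0 al by (intro powr_mono2) auto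
    have B2: "(s/2) powr \<alpha> = s powr \<alpha> / 2 powr \<alpha>" by (simp add: powr_divide s0)
    have B3: "2 powr \<alpha> \<le> 2" using al powr_mono[of \<alpha> 1 2] by simp
    have B4: "0 < s powr \<alpha>" using s0 by simp
    have B5: "s powr \<alpha> / 2 \<le> s powr \<alpha> / 2 powr \<alpha>"
      using B3 B4 by (intro divide_left_mono) auto
    have B: "s powr \<alpha> / 2 \<le> f p powr \<alpha>" using B1 B2 B5 by linarith
    have C: "s powr \<alpha> * u = s" using s0 by (simp add: u_def flip: powr_add)
    have "c * (s powr \<alpha> / 2) * lam \<le> c * f p powr \<alpha> * lam"
      using B c l0 by (simp add: mult_right_mono)
    also have "c * (s powr \<alpha> / 2) * lam = 2 * u / c"
    proof -
      have "c * (s powr \<alpha> / 2) * lam = c * (s powr \<alpha> * u) * \<kappa> * u / (2 * s)"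
        using s0 by (simp add: lam_def power2_eq_square)
      also have "\<dots> = 2 * u / c" unfolding C using s0 c by (simp add: \<kappa>_def power2_eq_square field_simps)
      finally show ?thesis .
    qed
    finally have "2 * u / c \<le> norm (p - y)" using A by linarith
    then have "(2 * u / c)^2 \<le> (norm (p - y))^2" using u0 c by (intro power_mono) auto
    then have "(2 * u / c)^2/(2*lam) \<le> (norm (p - y))^2/(2*lam)" using l0 by (simp add: divide_right_mono)
    moreover have "(2 * u / c)^2/(2*lam) = s/2"
      using s0 u0 c by (simp add: lam_def \<kappa>_def power2_eq_square field_simps)
    ultimately show False using p1 fp by (simp add: s_def)
  qed
  then show ?thesis using dyp by (auto simp: s_def u_def)
qed




lemma kl_growth:
  fixes f :: "'a::euclidean_space \<Rightarrow> real"
  assumes cvx: "convex_on UNIV f" and cont: "continuous_on UNIV f"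
    and nn: "\<forall>y. 0 \<le> f y" and al: "0 < \<alpha>" "\<alpha> < 1" and c: "c > 0"
    and KL: "\<forall>p w. dist p xb < \<delta> \<longrightarrow> 0 < f p \<longrightarrow> f p < a \<longrightarrow>
               (\<forall>y. f p + w \<bullet> (y - p) \<le> f y) \<longrightarrow> c * f p powr \<alpha> \<le> norm w"
  shows "\<exists>C>0. \<forall>x. f x < a \<longrightarrow> dist x xb + C * f x powr (1-\<alpha>) < \<delta> \<longrightarrow>
            (\<exists>z. f z = 0 \<and> dist x z \<le> C * f x powr (1-\<alpha>))"
proof -
  define K where "K = sqrt (8/c^2)"
  define r where "r = 1 / (2 powr (1-\<alpha>))"
  have K0: "0 < K" using c by (simp add: K_def)
  have "1 < 2 powr (1-\<alpha>)" using al by (intro gr_one_powr) auto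
  then have r0: "0 < r" "r < 1" by (auto simp: r_def)
  have C0: "0 < K/(1-r)" using K0 r0 by simp
  have main: "f x < a \<longrightarrow> dist x xb + K/(1-r) * f x powr (1-\<alpha>) < \<delta> \<longrightarrow>
            (\<exists>z. f z = 0 \<and> dist x z \<le> K/(1-r) * f x powr (1-\<alpha>))" for x
  proof (intro impI)
    assume xa: "f x < a" and xd: "dist x xb + K/(1-r) * f x powr (1-\<alpha>) < \<delta>"
    define t where "t = f x"
    define T where "T = t powr (1-\<alpha>)"
    have T0: "0 \<le> T" by (simp add: T_def)
    have geo: "(1 - r^k)/(1-r) + r^k = (1 - r^Suc k)/(1-r)" for k
      using r0 by (simp add: field_simps)
    have geo1: "(1 - r^k)/(1-r) \<le> 1/(1-r)" for k
      using r0 by (simp add: divide_right_mono)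
    have it: "\<exists>y. f y \<le> t \<and> f y powr (1-\<alpha>) \<le> T * r^k \<and> dist x y \<le> K * T * ((1 - r^k)/(1-r))" for k
    proof (induction k)
      case 0
      show ?case by (rule exI[of _ x]) (simp add: t_def T_def)
    next
      case (Suc k)
      then obtain y where y1: "f y \<le> t" and y2: "f y powr (1-\<alpha>) \<le> T * r^k"
        and y3: "dist x y \<le> K * T * ((1 - r^k)/(1-r))" by blast
      have mono1: "K * T * ((1 - r^k)/(1-r)) \<le> K * T * ((1 - r^Suc k)/(1-r))"
      proof -
        have "r^Suc k \<le> r^k" using r0 by (simp add: power_decreasing_iff mult_left_le_one_le)
        then have "(1 - r^k)/(1-r) \<le> (1 - r^Suc k)/(1-r)" using r0 by (simp add: divide_right_mono)
        then show ?thesis using K0 T0 by (metis mult_left_mono mult_nonneg_nonneg less_imp_le)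
      qed
      show ?case
      proof (cases "f y = 0")
        case True
        have "f y powr (1-\<alpha>) \<le> T * r^Suc k" using True T0 r0 by simp
        then show ?thesis using y1 y3 mono1 by (intro exI[of _ y]) auto
      next
        case False
        then have fy0: "0 < f y" using nn[rule_format, of y] by simp
        have fya: "f y < a" using y1 xa by (simp add: t_def)
        have "dist y xb + K * f y powr (1-\<alpha>) \<le> dist x xb + dist x y + K * (T * r^k)"
        proof -
          have "K * f y powr (1-\<alpha>) \<le> K * (T * r^k)" using y2 K0 by (simp add: mult_left_mono)
          moreover have "dist y xb \<le> dist x xb + dist x y" using dist_triangle[of y xb x] by (simp add: dist_commute)
          ultimately show ?thesis by linarith
        qed
        also have "\<dots> \<le> dist x xb + K * T * ((1 - r^k)/(1-r)) + K * T * r^k" using y3 by simp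
        also have "\<dots> = dist x xb + K * T * ((1 - r^Suc k)/(1-r))"
          using r0 by (simp add: field_simps)
        also have "\<dots> \<le> dist x xb + K * T * (1/(1-r))"
          using mult_left_mono[OF geo1[of "Suc k"], of "K*T"] K0 T0 by (simp del: power_Suc)
        also have "\<dots> < \<delta>" using xd by (simp add: T_def t_def)
        finally have "dist y xb + K * f y powr (1-\<alpha>) < \<delta>" .
        then obtain p where p1: "f p \<le> f y / 2" and p2: "dist y p \<le> K * f y powr (1-\<alpha>)"
          using kl_step[OF cvx cont nn al c KL fy0 fya] unfolding K_def by blast
        have "f p powr (1-\<alpha>) \<le> (f y / 2) powr (1-\<alpha>)"
          using p1 nn al by (intro powr_mono2) auto
        also have "\<dots> = f y powr (1-\<alpha>) * r" by (simp add: powr_divide r_def)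
        also have "\<dots> \<le> T * r^k * r" using y2 r0 by (simp add: mult_right_mono)
        finally have q2: "f p powr (1-\<alpha>) \<le> T * r^Suc k" by (simp add: mult.commute mult.left_commute)
        have "dist x p \<le> dist x y + dist y p" by (rule dist_triangle)
        also have "\<dots> \<le> K * T * ((1 - r^k)/(1-r)) + K * (T * r^k)"
          using y3 p2 y2 K0 by (smt (verit) mult_left_mono)
        also have "\<dots> = K * T * ((1 - r^Suc k)/(1-r))"
          using r0 by (simp add: field_simps)
        finally have q3: "dist x p \<le> K * T * ((1 - r^Suc k)/(1-r))" .
        have "f p \<le> t" using p1 y1 fy0 by simp
        then show ?thesis using q2 q3 by blast
      qed
    qed
    define R where "R = K * T * (1/(1-r))"
    have R0: "0 \<le> R" using K0 T0 r0 by (simp add: R_def)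
    have "continuous_on (cball x R) f" using cont by (rule continuous_on_subset) simp
    then obtain z where z1: "z \<in> cball x R" and z2: "\<forall>y\<in>cball x R. f z \<le> f y"
      using continuous_attains_inf[OF compact_cball, of x R f] R0 by auto
    have zk: "f z powr (1-\<alpha>) \<le> T * r^k" for k
    proof -
      obtain y where y1: "f y powr (1-\<alpha>) \<le> T * r^k" and y3: "dist x y \<le> K * T * ((1 - r^k)/(1-r))"
        using it[of k] by blast
      have "dist x y \<le> R" using y3 geo1[of k] K0 T0 unfolding R_def
        by (meson mult_left_mono mult_nonneg_nonneg less_imp_le order_trans)
      then have "f z \<le> f y" using z2 by simp
      then have "f z powr (1-\<alpha>) \<le> f y powr (1-\<alpha>)" using nn al by (intro powr_mono2) auto
      then show ?thesis using y1 by simp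
    qed
    have lim: "(\<lambda>k. T * r^k) \<longlonglongrightarrow> 0"
      using r0 by (intro tendsto_mult_right_zero LIMSEQ_power_zero) simp
    have "f z powr (1-\<alpha>) \<le> 0"
      by (rule LIMSEQ_le_const[OF lim]) (use zk in blast)
    then have "f z = 0" using nn[rule_format, of z] by (metis powr_gt_zero order_le_less not_le)
    moreover have "dist x z \<le> K/(1-r) * f x powr (1-\<alpha>)" using z1 by (simp add: R_def T_def t_def)
    ultimately show "\<exists>z. f z = 0 \<and> dist x z \<le> K/(1-r) * f x powr (1-\<alpha>)" by blast
  qed
  show ?thesis using C0 main by blast
qed


 

lemma mem_ne: "a \<in> A \<Longrightarrow> A \<noteq> {}" by auto

lemma matvec_comb:
  "matvec q M ((1-t) *\<^sub>R x + t *\<^sub>R y) = (\<lambda>k. t * matvec q M y k + (1-t) * matvec q M x k)"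
proof -
  have "(\<Sum>j\<in>UNIV. M k j * ((1-t) *\<^sub>R x + t *\<^sub>R y) $ j)
      = t * (\<Sum>j\<in>UNIV. M k j * y $ j) + (1-t) * (\<Sum>j\<in>UNIV. M k j * x $ j)" for k
  proof -
    have "(\<Sum>j\<in>UNIV. M k j * ((1-t) *\<^sub>R x + t *\<^sub>R y) $ j)
        = (\<Sum>j\<in>UNIV. t * (M k j * y $ j) + (1-t) * (M k j * x $ j))"
      by (rule sum.cong) (auto simp: algebra_simps)
    also have "\<dots> = t * (\<Sum>j\<in>UNIV. M k j * y $ j) + (1-t) * (\<Sum>j\<in>UNIV. M k j * x $ j)"
      by (simp add: sum.distrib sum_distrib_left)
    finally show ?thesis .
  qed
  then show ?thesis unfolding matvec_def by (auto simp: fun_eq_iff)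
qed

lemma matvec_Rq: "matvec q M x \<in> Rq q"
  unfolding matvec_def Rq_def by auto

lemma sconvex_le:
  assumes "strictly_convex_Rq q l" "u \<in> Rq q" "v \<in> Rq q" "0 < t" "t < 1"
  shows "l (\<lambda>k. t * u k + (1 - t) * v k) \<le> t * l u + (1 - t) * l v"
proof (cases "u = v")
  case True
  have "(\<lambda>k. t * u k + (1 - t) * u k) = u" by (auto simp: algebra_simps)
  then show ?thesis using True by (simp add: algebra_simps)
next
  case False
  then show ?thesis using assms unfolding strictly_convex_Rq_def by (auto intro: less_imp_le)
qed

lemma convex_comp_matvec:
  assumes "strictly_convex_Rq q l"
  shows "convex_on UNIV (\<lambda>x. l (matvec q M x))"
proof (rule convex_onI)
  fix t :: real and x y assume t: "0 < t" "t < 1"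
  show "l (matvec q M ((1-t) *\<^sub>R x + t *\<^sub>R y)) \<le> (1-t) * l (matvec q M x) + t * l (matvec q M y)"
    unfolding matvec_comb using sconvex_le[OF assms matvec_Rq[of q M y] matvec_Rq[of q M x] t] by (simp add: algebra_simps)
qed simp

theorem mainTheorem13:
  fixes P1 :: "real^'n \<Rightarrow> real"
    and m :: nat
    and q :: "nat \<Rightarrow> nat"
    and A :: "nat \<Rightarrow> nat \<Rightarrow> 'n \<Rightarrow> real"
    and l :: "nat \<Rightarrow> (nat \<Rightarrow> real) \<Rightarrow> real"
    and g :: "real^'n \<Rightarrow> nat \<Rightarrow> real"
    and F :: "real^'n \<Rightarrow> ereal"
    and xbar :: "real^'n"
    and lam :: "nat \<Rightarrow> real"
    and \<alpha> :: real
  assumes P1_convex: "convex_on UNIV P1"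
    and P1_cont: "continuous_on UNIV P1"
    and l_sconvex: "\<forall>i<m. strictly_convex_Rq (q i) (l i)"
    and g_def: "\<And>x i. g x i = l i (matvec (q i) (A i) x)"
    and feasible: "\<exists>x. \<forall>i<m. g x i \<le> 0"
    and F_def: "\<And>x. F x = (if (\<forall>i<m. g x i \<le> 0) then ereal (P1 x) else \<infinity>)"
    and argmin: "\<forall>x. F xbar \<le> F x"
    and lam_nonneg: "\<forall>i<m. lam i \<ge> 0"
    and lagrange: "(INF x. ereal (P1 x + (\<Sum>i<m. lam i * g x i))) = (INF x. F x)"
    and bounded: "(INF x. F x) > -\<infinity>"
    and \<alpha>_range: "0 < \<alpha>" "\<alpha> < 1"
    and KL_lag: "KL_function (\<lambda>x. ereal (P1 x + (\<Sum>i<m. lam i * g x i))) \<alpha>"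
    and strict_compl: "\<forall>i<m. lam i = 0 \<longrightarrow> g xbar i < 0"
  shows "KL_at F \<alpha> xbar"
proof -
  define L where "L x = P1 x + (\<Sum>i<m. lam i * g x i)" for x
  define h where "h x = ereal (L x)" for x
  define f where "f x = L x - L xbar" for x
  have g_cvx: "convex_on UNIV (\<lambda>x. g x i)" if "i < m" for i
    unfolding g_def using convex_comp_matvec l_sconvex that by blast
  have g_cont: "continuous_on UNIV (\<lambda>x. g x i)" if "i < m" for i
    using convex_on_continuous[OF open_UNIV g_cvx[OF that]] .
  have sum_cvx: "convex_on UNIV (\<lambda>x. \<Sum>i<m. lam i * g x i)"
  proof (rule convex_onI)
    fix t :: real and x y assume t: "0 < t" "t < 1"
    have "(\<Sum>i<m. lam i * g ((1-t) *\<^sub>R x + t *\<^sub>R y) i) \<le> (\<Sum>i<m. lam i * ((1-t) * g x i + t * g y i))"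
    proof (rule sum_mono)
      fix i assume "i \<in> {..<m}"
      then show "lam i * g ((1-t) *\<^sub>R x + t *\<^sub>R y) i \<le> lam i * ((1-t) * g x i + t * g y i)"
        using convex_onD[OF g_cvx, of i t x y] t lam_nonneg by (auto intro: mult_left_mono)
    qed
    also have "\<dots> = (\<Sum>i<m. (1-t) * (lam i * g x i) + t * (lam i * g y i))"
      by (rule sum.cong) (auto simp: algebra_simps)
    also have "\<dots> = (1-t) * (\<Sum>i<m. lam i * g x i) + t * (\<Sum>i<m. lam i * g y i)"
      by (simp add: sum.distrib sum_distrib_left)
    finally show "(\<Sum>i<m. lam i * g ((1-t) *\<^sub>R x + t *\<^sub>R y) i) \<le> (1-t) * (\<Sum>i<m. lam i * g x i) + t * (\<Sum>i<m. lam i * g y i)" .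
  qed simp
  have L_cvx: "convex_on UNIV L" unfolding L_def using P1_convex sum_cvx by (rule convex_on_add)
  have L_cont: "continuous_on UNIV L" using convex_on_continuous[OF open_UNIV L_cvx] .
  have "convex_on UNIV (\<lambda>x. L x + (- L xbar))" by (rule convex_on_add[OF L_cvx]) (simp add: convex_on_const)
  then have f_cvx: "convex_on UNIV f" unfolding f_def by simp
  have f_cont: "continuous_on UNIV f" unfolding f_def using L_cont by (intro continuous_intros)
  obtain x0 where x0: "\<forall>i<m. g x0 i \<le> 0" using feasible by blast
  have xbar_feas: "\<forall>i<m. g xbar i \<le> 0"
  proof (rule ccontr)
    assume "\<not> ?thesis"
    then have "F xbar = \<infinity>" using F_def by simp
    moreover have "F x0 = ereal (P1 x0)" using F_def x0 by simp
    ultimately show False using argmin[rule_format, of x0] by simp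
  qed
  have Fxb: "F xbar = ereal (P1 xbar)" using F_def xbar_feas by simp
  have INFF: "(INF x. F x) = F xbar"
    by (rule antisym) (auto intro: INF_lower INF_greatest simp: argmin)
  have Lge: "P1 xbar \<le> L x" for x
  proof -
    have "(INF x. ereal (L x)) \<le> ereal (L x)" by (rule INF_lower) simp
    then show ?thesis using lagrange INFF Fxb unfolding L_def by simp
  qed
  have Lle: "L x \<le> P1 x" if "\<forall>i<m. g x i \<le> 0" for x
  proof -
    have "(\<Sum>i<m. lam i * g x i) \<le> 0"
      using that lam_nonneg by (intro sum_nonpos) (simp add: mult_nonneg_nonpos)
    then show ?thesis by (simp add: L_def)
  qed
  have Lxb: "L xbar = P1 xbar" using Lle[OF xbar_feas] Lge[of xbar] by simp
  have f_nn: "\<forall>y. 0 \<le> f y" using Lge Lxb by (simp add: f_def)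
  have z0: "0 \<in> subdiff h xbar"
    unfolding subdiff_def using Lge Lxb by (simp add: h_def)
  have "xbar \<in> dom_subdiff h" unfolding dom_subdiff_def using mem_ne[OF z0] by simp
  then have "KL_at h \<alpha> xbar" using KL_lag unfolding KL_function_def h_def L_def by blast
  then obtain a V a0 where a0': "a > 0" and V: "open V" "xbar \<in> V" and a00: "a0 > 0"
    and KLh: "\<forall>x\<in>V. h xbar < h x \<and> h x < h xbar + a \<longrightarrow>
           subdiff h x = {} \<or>
           a0 * (1 - \<alpha>) * (real_of_ereal (h x - h xbar)) powr (- \<alpha>) * infdist 0 (subdiff h x) \<ge> 1"
    unfolding KL_at_def by blast
  obtain \<delta>1 where d1: "\<delta>1 > 0" "ball xbar \<delta>1 \<subseteq> V" using V open_contains_ball by blast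
  define ar where "ar = (if a = \<infinity> then 1 else real_of_ereal a)"
  have ar: "0 < ar \<and> ereal ar \<le> a"
  proof (cases a)
    case (real r) then show ?thesis using a0' by (simp add: ar_def)
  next
    case PInf then show ?thesis by (simp add: ar_def)
  next
    case MInf then show ?thesis using a0' by simp
  qed
  define c where "c = 1 / (a0 * (1 - \<alpha>))"
  have c0: "c > 0" using a00 \<alpha>_range by (simp add: c_def)
  have KLf: "\<forall>p w. dist p xbar < \<delta>1 \<longrightarrow> 0 < f p \<longrightarrow> f p < ar \<longrightarrow>
               (\<forall>y. f p + w \<bullet> (y - p) \<le> f y) \<longrightarrow> c * f p powr \<alpha> \<le> norm w"
  proof (intro allI impI)
    fix p w assume p1: "dist p xbar < \<delta>1" and p2: "0 < f p" and p3: "f p < ar"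
      and p4: "\<forall>y. f p + w \<bullet> (y - p) \<le> f y"
    have pV: "p \<in> V" using p1 d1 by (auto simp: dist_commute)
    have "h xbar < h p" using p2 by (simp add: h_def f_def)
    moreover have "h p < h xbar + a"
    proof -
      have "h p < h xbar + ereal ar" using p3 by (simp add: h_def f_def)
      also have "\<dots> \<le> h xbar + a" using ar by (simp add: h_def add_left_mono del: plus_ereal.simps)
      finally show ?thesis .
    qed
    moreover have wS: "w \<in> subdiff h p"
      unfolding subdiff_def using p4 by (simp add: h_def f_def algebra_simps)
    ultimately have "a0 * (1 - \<alpha>) * (real_of_ereal (h p - h xbar)) powr (- \<alpha>) * infdist 0 (subdiff h p) \<ge> 1"
      using KLh pV by auto
    moreover have "real_of_ereal (h p - h xbar) = f p" by (simp add: h_def f_def)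
    moreover have "infdist 0 (subdiff h p) \<le> norm w" using infdist_le[OF wS, of 0] by simp
    moreover have "0 \<le> a0 * (1 - \<alpha>) * f p powr (- \<alpha>)" using a00 \<alpha>_range by simp
    ultimately have "1 \<le> a0 * (1 - \<alpha>) * f p powr (- \<alpha>) * norm w"
      by (metis (no_types, lifting) mult_left_mono order_trans)
    then have "1 \<le> a0 * (1 - \<alpha>) * norm w / f p powr \<alpha>" by (simp add: powr_minus divide_inverse mult_ac)
    then have "f p powr \<alpha> \<le> a0 * (1 - \<alpha>) * norm w" using p2 by (simp add: divide_simps)
    then show "c * f p powr \<alpha> \<le> norm w" using a00 \<alpha>_range by (simp add: c_def field_simps)
  qed
  obtain C where C0: "C > 0" and Cgr: "\<forall>x. f x < ar \<longrightarrow> dist x xbar + C * f x powr (1-\<alpha>) < \<delta>1 \<longrightarrow>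
            (\<exists>z. f z = 0 \<and> dist x z \<le> C * f x powr (1-\<alpha>))"
    using kl_growth[OF f_cvx f_cont f_nn \<alpha>_range c0 KLf] ar by blast
  define S where "S = (\<Inter>i\<in>{i. i < m \<and> lam i = 0}. {y. g y i < 0})"
  have "open S" unfolding S_def
    by (rule open_INT) (auto intro!: open_Collect_less g_cont continuous_intros)
  moreover have "xbar \<in> S" using strict_compl by (auto simp: S_def)
  ultimately obtain \<delta>2 where d2: "\<delta>2 > 0" "ball xbar \<delta>2 \<subseteq> S" using open_contains_ball by blast
  (* strict convexity: minimizers of L share the active images *)
  have same: "matvec (q i) (A i) z = matvec (q i) (A i) xbar"
    if z: "f z = 0" and i: "i < m" "lam i > 0" for z i
  proof (rule ccontr)
    assume ne: "matvec (q i) (A i) z \<noteq> matvec (q i) (A i) xbar"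
    define mid where "mid = (1 - 1/2) *\<^sub>R xbar + (1/2::real) *\<^sub>R z"
    have P1m: "P1 mid \<le> (1 - 1/2) * P1 xbar + 1/2 * P1 z"
      unfolding mid_def using convex_onD[OF P1_convex, of "1/2" xbar z] by simp
    have gle: "lam j * g mid j \<le> lam j * ((1 - 1/2) * g xbar j + 1/2 * g z j)" if "j \<in> {..<m}" for j
      using that convex_onD[OF g_cvx, of j "1/2" xbar z] lam_nonneg unfolding mid_def
      by (auto intro: mult_left_mono)
    have glt: "lam i * g mid i < lam i * ((1 - 1/2) * g xbar i + 1/2 * g z i)"
    proof -
      have "g mid i = l i (\<lambda>k. 1/2 * matvec (q i) (A i) z k + (1 - 1/2) * matvec (q i) (A i) xbar k)"
        unfolding g_def mid_def matvec_comb by simp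
      also have "\<dots> < 1/2 * l i (matvec (q i) (A i) z) + (1 - 1/2) * l i (matvec (q i) (A i) xbar)"
      proof -
        have sc: "strictly_convex_Rq (q i) (l i)" using l_sconvex i by blast
        show ?thesis
          using sc[unfolded strictly_convex_Rq_def, rule_format, OF matvec_Rq[of "q i" "A i" z] matvec_Rq[of "q i" "A i" xbar], where t="1/2"] ne
          by simp
      qed
      finally have "g mid i < (1 - 1/2) * g xbar i + 1/2 * g z i" by (simp add: g_def algebra_simps)
      then show ?thesis by (rule mult_strict_left_mono) (use i in auto)
    qed
    have "(\<Sum>j<m. lam j * g mid j) < (\<Sum>j<m. lam j * ((1 - 1/2) * g xbar j + 1/2 * g z j))"
    proof (rule sum_strict_mono_ex1)
      show "\<forall>j\<in>{..<m}. lam j * g mid j \<le> lam j * ((1 - 1/2) * g xbar j + 1/2 * g z j)"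
        using gle by blast
      show "\<exists>j\<in>{..<m}. lam j * g mid j < lam j * ((1 - 1/2) * g xbar j + 1/2 * g z j)"
        using glt i(1) by blast
    qed simp
    also have "\<dots> = (1 - 1/2) * (\<Sum>j<m. lam j * g xbar j) + 1/2 * (\<Sum>j<m. lam j * g z j)"
    proof -
      have "(\<Sum>j<m. lam j * ((1 - 1/2) * g xbar j + 1/2 * g z j))
          = (\<Sum>j<m. (1 - 1/2) * (lam j * g xbar j) + 1/2 * (lam j * g z j))"
        by (rule sum.cong) (auto simp: algebra_simps)
      then show ?thesis by (simp add: sum.distrib sum_distrib_left)
    qed
    finally have "L mid < (1 - 1/2) * L xbar + 1/2 * L z" using P1m unfolding L_def by (simp only: distrib_left)
    moreover have "L z = L xbar" using z by (simp add: f_def)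
    ultimately have "L mid < L xbar" by simp
    then show False using Lge[of mid] Lxb by simp
  qed
  have zgood: "F z = ereal (P1 xbar)" if z: "f z = 0" "dist z xbar < \<delta>2" for z
  proof -
    have zS: "z \<in> S" using z d2 by (auto simp: dist_commute)
    have geq: "g z i = g xbar i" if "i < m" "lam i > 0" for i
      using same[OF z(1) that] by (simp add: g_def)
    have feas: "\<forall>i<m. g z i \<le> 0"
    proof (intro allI impI)
      fix i assume i: "i < m"
      show "g z i \<le> 0"
      proof (cases "lam i = 0")
        case True then show ?thesis using zS i by (auto simp: S_def)
      next
        case False then have "lam i > 0" using lam_nonneg[rule_format, OF i] by simp
        then show ?thesis using geq[OF i] xbar_feas i by simp
      qed
    qed
    have "(\<Sum>i<m. lam i * g z i) = (\<Sum>i<m. lam i * g xbar i)"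
    proof (rule sum.cong)
      fix i assume "i \<in> {..<m}"
      then have i: "i < m" by simp
      show "lam i * g z i = lam i * g xbar i"
      proof (cases "lam i = 0")
        case False then have "lam i > 0" using lam_nonneg[rule_format, OF i] by simp
        then show ?thesis using geq[OF i] by simp
      qed simp
    qed simp
    moreover have "L z = L xbar" using z by (simp add: f_def)
    ultimately have "P1 z = P1 xbar" using Lxb by (simp add: L_def)
    then show ?thesis using F_def feas by simp
  qed
  define \<delta>0 where "\<delta>0 = min \<delta>1 \<delta>2"
  have d0: "0 < \<delta>0" using d1 d2 by (simp add: \<delta>0_def)
  define b where "b = \<delta>0 / (2*C)"
  have b0: "0 < b" using d0 C0 by (simp add: b_def)
  define a1 where "a1 = min ar (b powr (1/(1-\<alpha>)))"
  have a10: "0 < a1" using ar b0 by (simp add: a1_def)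
  have a1b: "a1 powr (1-\<alpha>) \<le> b"
  proof -
    have "a1 powr (1-\<alpha>) \<le> (b powr (1/(1-\<alpha>))) powr (1-\<alpha>)"
      using a10 \<alpha>_range by (intro powr_mono2) (auto simp: a1_def)
    also have "\<dots> = b" using b0 \<alpha>_range by (simp add: powr_powr)
    finally show ?thesis .
  qed
  have xb_dom: "xbar \<in> dom_subdiff F"
  proof -
    have "0 \<in> subdiff F xbar" unfolding subdiff_def using argmin Fxb by simp
    then show ?thesis unfolding dom_subdiff_def using mem_ne by blast
  qed
  show ?thesis
    unfolding KL_at_def
  proof (intro conjI exI[of _ "ereal a1"] exI[of _ "ball xbar (\<delta>0/2)"] exI[of _ "C/(1-\<alpha>)"] xb_dom)
    show "ereal a1 > 0" using a10 by simp
    show "open (ball xbar (\<delta>0/2))" by simp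
    show "xbar \<in> ball xbar (\<delta>0/2)" using d0 by simp
    show "C/(1-\<alpha>) > 0" using C0 \<alpha>_range by simp
    show "\<forall>x\<in>ball xbar (\<delta>0/2). F xbar < F x \<and> F x < F xbar + ereal a1 \<longrightarrow>
           subdiff F x = {} \<or>
           C/(1-\<alpha>) * (1 - \<alpha>) * (real_of_ereal (F x - F xbar)) powr (- \<alpha>) * infdist 0 (subdiff F x) \<ge> 1"
    proof (intro ballI impI)
      fix x assume xB: "x \<in> ball xbar (\<delta>0/2)" and xF: "F xbar < F x \<and> F x < F xbar + ereal a1"
      have xfeas: "\<forall>i<m. g x i \<le> 0"
      proof (rule ccontr)
        assume "\<not> ?thesis" then have "F x = \<infinity>" using F_def by simp
        then show False using xF Fxb by simp
      qed
      have Fx: "F x = ereal (P1 x)" using F_def xfeas by simp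
      define T where "T = P1 x - P1 xbar"
      have T0: "0 < T" "T < a1" using xF Fx Fxb by (auto simp: T_def)
      have fxT: "f x \<le> T" using Lle[OF xfeas] Lxb by (simp add: f_def T_def)
      have fx0: "0 \<le> f x" using f_nn by simp
      have fxa: "f x < ar" using fxT T0 by (simp add: a1_def)
      have fpow: "f x powr (1-\<alpha>) \<le> T powr (1-\<alpha>)" using fx0 fxT \<alpha>_range by (intro powr_mono2) auto
      have Tpow: "T powr (1-\<alpha>) \<le> a1 powr (1-\<alpha>)" using T0 \<alpha>_range by (intro powr_mono2) auto
      have CT: "C * T powr (1-\<alpha>) \<le> \<delta>0/2"
      proof -
        have "C * T powr (1-\<alpha>) \<le> C * b" using Tpow a1b C0 by (simp add: mult_left_mono)
        also have "\<dots> = \<delta>0/2" using C0 by (simp add: b_def)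
        finally show ?thesis .
      qed
      have Cf: "C * f x powr (1-\<alpha>) \<le> C * T powr (1-\<alpha>)" using fpow C0 by (simp add: mult_left_mono)
      have dx: "dist x xbar < \<delta>0/2" using xB by (simp add: dist_commute)
      have "dist x xbar + C * f x powr (1-\<alpha>) < \<delta>1" using dx Cf CT by (simp add: \<delta>0_def)
      then obtain z where z1: "f z = 0" and z2: "dist x z \<le> C * f x powr (1-\<alpha>)"
        using Cgr fxa by blast
      have dz: "dist x z \<le> C * T powr (1-\<alpha>)" using z2 Cf by simp
      have "dist z xbar \<le> dist x z + dist x xbar" using dist_triangle[of z xbar x] by (simp add: dist_commute)
      then have "dist z xbar < \<delta>2" using dz CT dx by (simp add: \<delta>0_def)
      then have Fz: "F z = ereal (P1 xbar)" using zgood z1 by blast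
      have vbound: "T powr \<alpha> / C \<le> norm v" if v: "v \<in> subdiff F x" for v
      proof -
        have "F x + ereal (v \<bullet> (z - x)) \<le> F z" using v unfolding subdiff_def by blast
        then have "P1 x + v \<bullet> (z - x) \<le> P1 xbar" using Fx Fz by simp
        then have "T \<le> v \<bullet> (x - z)" by (simp add: T_def inner_diff_right)
        also have "\<dots> \<le> norm v * norm (x - z)" by (rule norm_cauchy_schwarz)
        also have "\<dots> \<le> norm v * (C * T powr (1-\<alpha>))" using dz by (simp add: dist_norm mult_left_mono)
        finally have "T \<le> norm v * (C * T powr (1-\<alpha>))" .
        moreover have "T = T powr \<alpha> * T powr (1-\<alpha>)" using T0 by (simp flip: powr_add)
        ultimately have "T powr \<alpha> * T powr (1-\<alpha>) \<le> (norm v * C) * T powr (1-\<alpha>)" by (simp add: mult_ac)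
        then have "T powr \<alpha> \<le> norm v * C" using T0 by (simp add: mult_le_cancel_right)
        then show ?thesis using C0 by (simp add: divide_simps mult_ac)
      qed
      show "subdiff F x = {} \<or>
           C/(1-\<alpha>) * (1 - \<alpha>) * (real_of_ereal (F x - F xbar)) powr (- \<alpha>) * infdist 0 (subdiff F x) \<ge> 1"
      proof (cases "subdiff F x = {}")
        case False
        have inf: "T powr \<alpha> / C \<le> infdist 0 (subdiff F x)"
          unfolding infdist_def using False vbound by (auto intro!: cINF_greatest)
        have "real_of_ereal (F x - F xbar) = T" using Fx Fxb by (simp add: T_def)
        moreover have "C/(1-\<alpha>) * (1 - \<alpha>) = C" using \<alpha>_range by simp
        moreover have "C * T powr (- \<alpha>) * (T powr \<alpha> / C) = 1"
          using C0 T0 by (simp add: powr_minus field_simps)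
        moreover have "C * T powr (- \<alpha>) * (T powr \<alpha> / C) \<le> C * T powr (- \<alpha>) * infdist 0 (subdiff F x)"
          using inf C0 T0 by (intro mult_left_mono) auto
        ultimately show ?thesis by simp
      qed simp
    qed
  qed
qed


end
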